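(* Let $(F,+,\cdot)$ be a (left) near-field, $I$ an index set, and $\boldsymbol\sigma=(\sigma_i)_{i\in I}$, $\boldsymbol\rho=(\rho_i)_{i\in I}$ families of multiplicative automorphisms of $F$. Let $\boldsymbol{\mathrm{Id}}=(\mathrm{Id})_{i\in I}$ and $\boldsymbol\theta=(\sigma_i\circ\rho_i)_{i\in I}$. Then (1) $F^{\boldsymbol\sigma,\boldsymbol\rho}\simeq F^{\boldsymbol\theta,\boldsymbol{\mathrm{Id}}}$, and (2) $F^{\boldsymbol\sigma,\boldsymbol\rho}\simeq F^{\boldsymbol{\mathrm{Id}},\boldsymbol\theta}$, as near-vector spaces.
   Context: A (left) near-field is $(F,+,\cdot,0,1)$ where $(F,\cdot,1)$ is a monoid, $(F\setminus\{0\},\cdot)$ is a group, $(F,+,0)$ is an abelian group, and $\alpha(\beta+\gamma)=\alpha\beta+\alpha\gamma$. A multiplicative automorphism is a monoid automorphism of $(F,\cdot)$. For $\tau$ multiplicative, $\alpha+_\tau\beta=\tau^{-1}(\tau(\alpha)+\tau(\beta))$. For families $\boldsymbol\sigma=(\sigma_i)_{i\in I}$, $\boldsymbol\rho=(\rho_i)_{i\in I}$ of multiplicative automorphisms, $F^{\boldsymbol\sigma,\boldsymbol\rho}$ is the set of finitely supported $(\alpha_i)_{i\in I}\in F^I$ with addition $(\alpha_i)+_{\boldsymbol\sigma}(\beta_i)=(\alpha_i+_{\sigma_i}\beta_i)$ and scalar multiplication $\alpha\cdot_{\boldsymbol\rho}(\alpha_i)=(\rho_i(\alpha)\alpha_i)$;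 it is a near-vector space over the scalar group $(F,\cdot,1,0,-1)$. An isomorphism of near-vector spaces $V_1\to V_2$ over $F$ is a pair $(\theta,\eta)$ with $\theta$ an additive bijection and $\eta$ a monoid automorphism of $F\setminus\{0\}$ such that $\theta(\alpha u)=\eta(\alpha)\theta(u)$. *)

theory Defs
  imports Main
begin

definition near_field :: "'a::{ab_group_add,monoid_mult} itself \<Rightarrow> bool" where
  "near_field _ \<longleftrightarrow>
     (1::'a) \<noteq> 0 \<and>
     (\<forall>a b::'a. a \<noteq> 0 \<longrightarrow> b \<noteq> 0 \<longrightarrow> a * b \<noteq> 0) \<and>
     (\<forall>a::'a. a \<noteq> 0 \<longrightarrow> (\<exists>b. b \<noteq> 0 \<and> a * b = 1 \<and> b * a = 1)) \<and>
     (\<forall>a b c::'a. a * (b + c) = a * b + a * c)"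

definition mult_aut :: "('a::monoid_mult \<Rightarrow> 'a) \<Rightarrow> bool" where
  "mult_aut \<tau> \<longleftrightarrow> bij \<tau> \<and> \<tau> 1 = 1 \<and> (\<forall>a b. \<tau> (a * b) = \<tau> a * \<tau> b)"

definition add_tw :: "('a::{plus,times} \<Rightarrow> 'a) \<Rightarrow> 'a \<Rightarrow> 'a \<Rightarrow> 'a" where
  "add_tw \<tau> a b = inv \<tau> (\<tau> a + \<tau> b)"

text \<open>Carrier of F^{sigma,rho}: finitely supported families indexed by the type 'i.\<close>
definition fsupp :: "('i \<Rightarrow> 'a::zero) set" where
  "fsupp = {u. finite {i. u i \<noteq> 0}}"

definition vadd :: "('i \<Rightarrow> 'a \<Rightarrow> 'a) \<Rightarrow> ('i \<Rightarrow> 'a::{plus,times}) \<Rightarrow> ('i \<Rightarrow> 'a) \<Rightarrow> ('i \<Rightarrow> 'a)" where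
  "vadd \<sigma> u v = (\<lambda>i. add_tw (\<sigma> i) (u i) (v i))"

definition smul :: "('i \<Rightarrow> 'a \<Rightarrow> 'a) \<Rightarrow> 'a::times \<Rightarrow> ('i \<Rightarrow> 'a) \<Rightarrow> ('i \<Rightarrow> 'a)" where
  "smul \<rho> a u = (\<lambda>i. \<rho> i a * u i)"

definition nvs_iso ::
  "('i \<Rightarrow> 'a \<Rightarrow> 'a) \<Rightarrow> ('i \<Rightarrow> 'a \<Rightarrow> 'a) \<Rightarrow> ('i \<Rightarrow> 'a \<Rightarrow> 'a) \<Rightarrow> ('i \<Rightarrow> 'a \<Rightarrow> 'a)
    \<Rightarrow> (('i \<Rightarrow> 'a) \<Rightarrow> ('i \<Rightarrow> 'a)) \<Rightarrow> ('a::{ab_group_add,monoid_mult} \<Rightarrow> 'a) \<Rightarrow> bool" where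
  "nvs_iso s1 r1 s2 r2 th \<eta> \<longleftrightarrow>
     bij_betw th fsupp fsupp \<and>
     (\<forall>u\<in>fsupp. \<forall>v\<in>fsupp. th (vadd s1 u v) = vadd s2 (th u) (th v)) \<and>
     bij_betw \<eta> (UNIV - {0}) (UNIV - {0}) \<and> \<eta> 1 = 1 \<and> \<eta> 0 = 0 \<and>
     (\<forall>a b. a \<noteq> 0 \<longrightarrow> b \<noteq> 0 \<longrightarrow> \<eta> (a * b) = \<eta> a * \<eta> b) \<and>
     (\<forall>a. \<forall>u\<in>fsupp. th (smul r1 a u) = smul r2 (\<eta> a) (th u))"

definition nvs_isomorphic ::
  "('i \<Rightarrow> 'a \<Rightarrow> 'a) \<Rightarrow> ('i \<Rightarrow> 'a \<Rightarrow> 'a) \<Rightarrow> ('i \<Rightarrow> 'a \<Rightarrow> 'a) \<Rightarrow> ('i \<Rightarrow> 'a::{ab_group_add,monoid_mult} \<Rightarrow> 'a) \<Rightarrow> bool" where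
  "nvs_isomorphic s1 r1 s2 r2 \<longleftrightarrow> (\<exists>th \<eta>. nvs_iso s1 r1 s2 r2 th \<eta>)"

end

theory Submission
  imports Defs
begin

lemma nf_mult_zero:
  assumes "near_field TYPE('a::{ab_group_add,monoid_mult})"
  shows "(x::'a) * 0 = 0"
proof -
  have "x * (0 + 0) = x * 0 + x * 0" using assms unfolding near_field_def by blast
  then show ?thesis by simp
qed

lemma nf_zero_mult:
  assumes nf: "near_field TYPE('a::{ab_group_add,monoid_mult})"
  shows "0 * (a::'a) = 0"
proof (cases "a = 0")
  case True then show ?thesis using nf_mult_zero[OF nf] by simp
next
  case False
  then obtain b where b: "b \<noteq> 0" "a * b = 1" using nf unfolding near_field_def by blast
  show ?thesis
  proof (rule ccontr)
    assume c: "0 * a \<noteq> 0"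
    have "0 * a * b \<noteq> 0" using nf c b unfolding near_field_def by blast
    moreover have "0 * a * b = 0" by (simp add: mult.assoc b nf_mult_zero[OF nf])
    ultimately show False by simp
  qed
qed

lemma aut_zero:
  assumes nf: "near_field TYPE('a::{ab_group_add,monoid_mult})" and m: "mult_aut (\<tau>::'a \<Rightarrow> 'a)"
  shows "\<tau> 0 = 0"
proof -
  obtain z where z: "\<tau> z = 0" using m unfolding mult_aut_def bij_def surj_def by metis
  have "\<tau> 0 = \<tau> (0 * z)" by (simp add: nf_zero_mult[OF nf])
  also have "\<dots> = \<tau> 0 * \<tau> z" using m unfolding mult_aut_def by blast
  also have "\<dots> = 0" by (simp add: z nf_mult_zero[OF nf])
  finally show ?thesis .
qed

lemma aut_inv:
  assumes m: "mult_aut (\<tau>::'a::monoid_mult \<Rightarrow> 'a)"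
  shows "inv \<tau> (a * b) = inv \<tau> a * inv \<tau> b"
proof -
  have b: "bij \<tau>" using m unfolding mult_aut_def by blast
  have "\<tau> (inv \<tau> a * inv \<tau> b) = a * b"
    using m b unfolding mult_aut_def by (simp add: bij_is_surj surj_f_inv_f)
  then show ?thesis using b by (metis bij_inv_eq_iff)
qed

lemma fsupp_bij:
  fixes g h :: "'i \<Rightarrow> 'a::zero \<Rightarrow> 'a"
  assumes g0: "\<And>i. g i 0 = 0" and h0: "\<And>i. h i 0 = 0"
    and gh: "\<And>i x. g i (h i x) = x" and hg: "\<And>i x. h i (g i x) = x"
  shows "bij_betw (\<lambda>u i. g i (u i)) fsupp fsupp"
proof -
  have sg: "\<And>u. {i. g i (u i) \<noteq> 0} = {i. u i \<noteq> 0}" by (metis g0 hg)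
  have sh: "\<And>u. {i. h i (u i) \<noteq> 0} = {i. u i \<noteq> 0}" by (metis h0 gh)
  show ?thesis
    apply (rule bij_betw_byWitness[where f'="\<lambda>u i. h i (u i)"])
    using sg sh by (auto simp: fsupp_def gh hg)
qed

theorem lemma3p14:
  fixes \<sigma> \<rho> :: "'i \<Rightarrow> 'a::{ab_group_add,monoid_mult} \<Rightarrow> 'a"
  assumes "near_field TYPE('a)"
    and "\<forall>i. mult_aut (\<sigma> i)"
    and "\<forall>i. mult_aut (\<rho> i)"
  shows "nvs_isomorphic \<sigma> \<rho> (\<lambda>i. \<sigma> i \<circ> \<rho> i) (\<lambda>i. id)
       \<and> nvs_isomorphic \<sigma> \<rho> (\<lambda>i. id) (\<lambda>i. \<sigma> i \<circ> \<rho> i)"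
proof
  have bs: "\<And>i. bij (\<sigma> i)" and br: "\<And>i. bij (\<rho> i)" using assms(2,3) unfolding mult_aut_def by auto
  have s0: "\<And>i. \<sigma> i 0 = 0" and r0: "\<And>i. \<rho> i 0 = 0"
    using aut_zero[OF assms(1)] assms(2,3) by auto
  have ri0: "\<And>i. inv (\<rho> i) 0 = 0" by (metis r0 br bij_inv_eq_iff)
  have rir: "\<And>i x. inv (\<rho> i) (\<rho> i x) = x" using br by (simp add: bij_is_inj bij_is_surj inv_f_f surj_f_inv_f)
  have rri: "\<And>i x. \<rho> i (inv (\<rho> i) x) = x" using br by (simp add: bij_is_inj bij_is_surj inv_f_f surj_f_inv_f)
  have sis: "\<And>i x. inv (\<sigma> i) (\<sigma> i x) = x" using bs by (simp add: bij_is_inj bij_is_surj inv_f_f surj_f_inv_f)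
  have ssi: "\<And>i x. \<sigma> i (inv (\<sigma> i) x) = x" using bs by (simp add: bij_is_inj bij_is_surj inv_f_f surj_f_inv_f)
  have rm: "\<And>i a b. \<rho> i (a * b) = \<rho> i a * \<rho> i b" using assms(3) unfolding mult_aut_def by blast
  have sm: "\<And>i a b. \<sigma> i (a * b) = \<sigma> i a * \<sigma> i b" using assms(2) unfolding mult_aut_def by blast
  have invid: "inv (id::'a\<Rightarrow>'a) = id" by (simp add: inv_id)
  have eta: "bij_betw (id::'a\<Rightarrow>'a) (UNIV - {0}) (UNIV - {0})" by simp
  have invc: "\<And>i. inv (\<sigma> i \<circ> \<rho> i) = inv (\<rho> i) \<circ> inv (\<sigma> i)"
    using bs br by (simp add: o_inv_distrib)
  show "nvs_isomorphic \<sigma> \<rho> (\<lambda>i. \<sigma> i \<circ> \<rho> i) (\<lambda>i. id)"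
    unfolding nvs_isomorphic_def nvs_iso_def
  proof (intro exI conjI)
    show "bij_betw (\<lambda>u i. inv (\<rho> i) (u i)) fsupp fsupp"
      by (rule fsupp_bij[OF ri0 r0 rir rri])
    show "\<forall>u\<in>fsupp. \<forall>v\<in>fsupp. (\<lambda>i. inv (\<rho> i) (vadd \<sigma> u v i)) =
        vadd (\<lambda>i. \<sigma> i \<circ> \<rho> i) (\<lambda>i. inv (\<rho> i) (u i)) (\<lambda>i. inv (\<rho> i) (v i))"
      by (simp add: vadd_def add_tw_def invc rri)
    show "\<forall>a. \<forall>u\<in>fsupp. (\<lambda>i. inv (\<rho> i) (smul \<rho> a u i)) =
        smul (\<lambda>i. id) (id a) (\<lambda>i. inv (\<rho> i) (u i))"
      using assms(3) by (simp add: smul_def aut_inv rir)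
  qed (use eta in \<open>auto simp: id_def\<close>)
  show "nvs_isomorphic \<sigma> \<rho> (\<lambda>i. id) (\<lambda>i. \<sigma> i \<circ> \<rho> i)"
    unfolding nvs_isomorphic_def nvs_iso_def
  proof (intro exI conjI)
    have si0: "\<And>i. inv (\<sigma> i) 0 = 0" by (metis s0 bs bij_inv_eq_iff)
    show "bij_betw (\<lambda>u i. \<sigma> i (u i)) fsupp fsupp"
      by (rule fsupp_bij[OF s0 si0 ssi sis])
    show "\<forall>u\<in>fsupp. \<forall>v\<in>fsupp. (\<lambda>i. \<sigma> i (vadd \<sigma> u v i)) =
        vadd (\<lambda>i. id) (\<lambda>i. \<sigma> i (u i)) (\<lambda>i. \<sigma> i (v i))"
      by (simp add: vadd_def add_tw_def invid ssi)
    show "\<forall>a. \<forall>u\<in>fsupp. (\<lambda>i. \<sigma> i (smul \<rho> a u i)) =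
        smul (\<lambda>i. \<sigma> i \<circ> \<rho> i) (id a) (\<lambda>i. \<sigma> i (u i))"
      by (simp add: smul_def sm)
  qed (use eta in \<open>auto simp: id_def\<close>)
qed

end
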